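(* Let $G=(V,E)$ be a connected graph with positive edge costs $c:E\to\mathbb{R}_+$, let $\alpha\ge1$, and let $(U,\complement{U})$ be an $\alpha$-approximate minimum cut of $G$. Then there exists a subset $T\subseteq\complement{U}$ with $|T|\le\lfloor2\alpha\rfloor+1$ such that $(U,\complement{U})$ is the unique minimum $(U,T)$-terminal cut.
   Context: A cut is a partition of $V$ into two non-empty parts; for $\emptyset\ne U\subsetneq V$ write $\complement{U}=V\setminus U$ and $d(U)$ for the total cost of edges with exactly one endpoint in $U$. Let $\lambda=\min\{d(U):\emptyset\ne U\subsetneq V\}$; $(U,\complement{U})$ is an $\alpha$-approximate minimum cut if $d(U)\le\alpha\lambda$. For disjoint non-empty $S,T\subseteq V$, a cut $(X,\complement{X})$ is an $(S,T)$-terminal cut if $S\subseteq X\subseteq V\setminus T$; a minimum $(S,T)$-terminal cut is one minimizing $d(X)$ among these. *)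

theory Defs
  imports Complex_Main
begin

definition graph :: "'a set \<Rightarrow> 'a set set \<Rightarrow> bool" where
  "graph V E \<longleftrightarrow> finite V \<and> (\<forall>e\<in>E. e \<subseteq> V \<and> card e = 2)"

definition adj :: "'a set set \<Rightarrow> ('a \<times> 'a) set" where
  "adj E = {(u, v). {u, v} \<in> E}"

definition connected_graph :: "'a set \<Rightarrow> 'a set set \<Rightarrow> bool" where
  "connected_graph V E \<longleftrightarrow> graph V E \<and> V \<noteq> {} \<and>
     (\<forall>u\<in>V. \<forall>v\<in>V. (u, v) \<in> (adj E)\<^sup>*)"

definition cut_cost :: "'a set set \<Rightarrow> ('a set \<Rightarrow> real) \<Rightarrow> 'a set \<Rightarrow> real" where
  "cut_cost E c U = (\<Sum>e\<in>{e\<in>E. card (e \<inter> U) = 1}. c e)"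

definition is_cut :: "'a set \<Rightarrow> 'a set \<Rightarrow> bool" where
  "is_cut V U \<longleftrightarrow> U \<noteq> {} \<and> U \<subset> V"

definition min_cut_value :: "'a set \<Rightarrow> 'a set set \<Rightarrow> ('a set \<Rightarrow> real) \<Rightarrow> real" where
  "min_cut_value V E c = Min {cut_cost E c U | U. is_cut V U}"

definition approx_min_cut ::
  "'a set \<Rightarrow> 'a set set \<Rightarrow> ('a set \<Rightarrow> real) \<Rightarrow> real \<Rightarrow> 'a set \<Rightarrow> bool" where
  "approx_min_cut V E c \<alpha> U \<longleftrightarrow> is_cut V U \<and> cut_cost E c U \<le> \<alpha> * min_cut_value V E c"

definition terminal_cut :: "'a set \<Rightarrow> 'a set \<Rightarrow> 'a set \<Rightarrow> 'a set \<Rightarrow> bool" where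
  "terminal_cut V S T X \<longleftrightarrow> is_cut V X \<and> S \<subseteq> X \<and> X \<subseteq> V - T"

definition unique_min_terminal_cut ::
  "'a set \<Rightarrow> 'a set set \<Rightarrow> ('a set \<Rightarrow> real) \<Rightarrow> 'a set \<Rightarrow> 'a set \<Rightarrow> 'a set \<Rightarrow> bool" where
  "unique_min_terminal_cut V E c S T X \<longleftrightarrow>
     S \<noteq> {} \<and> T \<noteq> {} \<and> S \<inter> T = {} \<and> S \<subseteq> V \<and> T \<subseteq> V \<and>
     terminal_cut V S T X \<and>
     (\<forall>Y. terminal_cut V S T Y \<and> Y \<noteq> X \<longrightarrow> cut_cost E c X < cut_cost E c Y)"

end

theory Submission
  imports Defs
begin

lemma card_cross2:
  assumes "x \<noteq> y"
  shows "card ({x, y} \<inter> X) = 1 \<longleftrightarrow> ((x \<in> X) \<noteq> (y \<in> X))"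
  using assms by (cases "x \<in> X"; cases "y \<in> X") (auto simp: Int_insert_left)

lemma card_symdiff_ge:
  assumes "finite a" "finite b"
  shows "card a \<le> card {t\<in>a \<union> b. (t\<in>a) \<noteq> (t\<in>b)} + card b"
proof -
  have "a \<subseteq> {t\<in>a \<union> b. (t\<in>a) \<noteq> (t\<in>b)} \<union> b" by auto
  then have "card a \<le> card ({t\<in>a \<union> b. (t\<in>a) \<noteq> (t\<in>b)} \<union> b)"
    by (intro card_mono) (use assms in auto)
  also have "\<dots> \<le> card {t\<in>a \<union> b. (t\<in>a) \<noteq> (t\<in>b)} + card b" by (rule card_Un_le)
  finally show ?thesis .
qed

lemma level_count:
  fixes p q n :: nat
  assumes "p \<le> q"
  shows "card {j\<in>{3..n}. (j \<le> p) \<noteq> (j \<le> q)} \<le> q - max p 2"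
proof -
  have "{j\<in>{3..n}. (j \<le> p) \<noteq> (j \<le> q)} \<subseteq> {Suc (max p 2)..q}" using assms by auto
  from card_mono[OF _ this] show ?thesis by simp
qed

lemma edge_count:
  fixes S a b :: "'b set"
  assumes S: "finite S" and ab: "a \<subseteq> S" "b \<subseteq> S"
  shows "card {j\<in>{3..card S}. (j \<le> card a) \<noteq> (j \<le> card b)}
       + card {t\<in>S. (t\<in>a \<and> card a = 1) \<noteq> (t\<in>b \<and> card b = 1)}
       \<le> card {t\<in>S. (t\<in>a) \<noteq> (t\<in>b)}"
proof -
  have fa: "finite a" "finite b" using ab S finite_subset by auto
  have eq: "{t\<in>S. (t\<in>a) \<noteq> (t\<in>b)} = {t\<in>a \<union> b. (t\<in>a) \<noteq> (t\<in>b)}" using ab by auto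
  have eq2: "{t\<in>S. (t\<in>a) \<noteq> (t\<in>b)} = {t\<in>b \<union> a. (t\<in>b) \<noteq> (t\<in>a)}" using ab by auto
  have h1: "card a \<le> card {t\<in>S. (t\<in>a) \<noteq> (t\<in>b)} + card b"
    using card_symdiff_ge[OF fa] eq by simp
  have h2: "card b \<le> card {t\<in>S. (t\<in>a) \<noteq> (t\<in>b)} + card a"
    using card_symdiff_ge[OF fa(2) fa(1)] eq2 by simp
  have g1: "card {j\<in>{3..card S}. (j \<le> card a) \<noteq> (j \<le> card b)} \<le> card b - max (card a) 2"
    if "card a \<le> card b" using level_count[OF that] by simp
  have g2: "card {j\<in>{3..card S}. (j \<le> card a) \<noteq> (j \<le> card b)} \<le> card a - max (card b) 2"
    if "card b \<le> card a"
  proof -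
    have "{j\<in>{3..card S}. (j \<le> card a) \<noteq> (j \<le> card b)} = {j\<in>{3..card S}. (j \<le> card b) \<noteq> (j \<le> card a)}" by auto
    then show ?thesis using level_count[OF that, of "card S"] by simp
  qed
  consider "card a \<noteq> 1" "card b \<noteq> 1" | "card a = 1" "card b \<noteq> 1" | "card a \<noteq> 1" "card b = 1"
    | "card a = 1" "card b = 1" by blast
  then show ?thesis
  proof cases
    case 1
    then have "{t\<in>S. (t\<in>a \<and> card a = 1) \<noteq> (t\<in>b \<and> card b = 1)} = {}" by auto
    then have H0: "card {t\<in>S. (t\<in>a \<and> card a = 1) \<noteq> (t\<in>b \<and> card b = 1)} = 0" by (metis card.empty)
    have "card {j\<in>{3..card S}. (j \<le> card a) \<noteq> (j \<le> card b)} \<le> card {t\<in>S. (t\<in>a) \<noteq> (t\<in>b)}"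
    proof (cases "card a \<le> card b")
      case True
      then show ?thesis using g1[OF True] h2 by linarith
    next
      case False
      then show ?thesis using g2 h1 by linarith
    qed
    then show ?thesis using H0 by linarith
  next
    case 2
    then have e3: "{t\<in>S. (t\<in>a \<and> card a = 1) \<noteq> (t\<in>b \<and> card b = 1)} = a" using ab by auto
    have "a \<noteq> b" using 2 by auto
    then have pos: "card {t\<in>S. (t\<in>a) \<noteq> (t\<in>b)} \<ge> 1"
    proof -
      assume "a \<noteq> b"
      then obtain t where "t \<in> S" "(t\<in>a) \<noteq> (t\<in>b)" using ab by blast
      then have "{t\<in>S. (t\<in>a) \<noteq> (t\<in>b)} \<noteq> {}" by blast
      moreover have "finite {t\<in>S. (t\<in>a) \<noteq> (t\<in>b)}" using S by simp
      ultimately show ?thesis by (simp add: Suc_le_eq card_gt_0_iff)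
    qed
    show ?thesis
    proof (cases "card b = 0")
      case True
      then have "{j\<in>{3..card S}. (j \<le> card a) \<noteq> (j \<le> card b)} = {}" using 2 by auto
      then have G0: "card {j\<in>{3..card S}. (j \<le> card a) \<noteq> (j \<le> card b)} = 0" by (metis card.empty)
      have H1: "card {t\<in>S. (t\<in>a \<and> card a = 1) \<noteq> (t\<in>b \<and> card b = 1)} = 1" using e3 2 by simp
      show ?thesis using G0 H1 pos by linarith
    next
      case False
      have H1: "card {t\<in>S. (t\<in>a \<and> card a = 1) \<noteq> (t\<in>b \<and> card b = 1)} = 1" using e3 2 by simp
      show ?thesis using H1 2 g1 h2 pos False by auto
    qed
  next
    case 3
    then have e3: "{t\<in>S. (t\<in>a \<and> card a = 1) \<noteq> (t\<in>b \<and> card b = 1)} = b" using ab by auto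
    have "a \<noteq> b" using 3 by auto
    then have pos: "card {t\<in>S. (t\<in>a) \<noteq> (t\<in>b)} \<ge> 1"
    proof -
      assume "a \<noteq> b"
      then obtain t where "t \<in> S" "(t\<in>a) \<noteq> (t\<in>b)" using ab by blast
      then have "{t\<in>S. (t\<in>a) \<noteq> (t\<in>b)} \<noteq> {}" by blast
      moreover have "finite {t\<in>S. (t\<in>a) \<noteq> (t\<in>b)}" using S by simp
      ultimately show ?thesis by (simp add: Suc_le_eq card_gt_0_iff)
    qed
    show ?thesis
    proof (cases "card a = 0")
      case True
      then have "{j\<in>{3..card S}. (j \<le> card a) \<noteq> (j \<le> card b)} = {}" using 3 by auto
      then have G0: "card {j\<in>{3..card S}. (j \<le> card a) \<noteq> (j \<le> card b)} = 0" by (metis card.empty)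
      have H1: "card {t\<in>S. (t\<in>a \<and> card a = 1) \<noteq> (t\<in>b \<and> card b = 1)} = 1" using e3 3 by simp
      show ?thesis using G0 H1 pos by linarith
    next
      case False
      have H1: "card {t\<in>S. (t\<in>a \<and> card a = 1) \<noteq> (t\<in>b \<and> card b = 1)} = 1" using e3 3 by simp
      show ?thesis using H1 3 g2 h1 pos False by auto
    qed
  next
    case 4
    then have "{j\<in>{3..card S}. (j \<le> card a) \<noteq> (j \<le> card b)} = {}" by auto
    moreover have "{t\<in>S. (t\<in>a \<and> card a = 1) \<noteq> (t\<in>b \<and> card b = 1)} = {t\<in>S. (t\<in>a) \<noteq> (t\<in>b)}"
      using 4 by auto
    ultimately show ?thesis by simp
  qed
qed

lemma cut_cost_as_sum:
  assumes "finite E"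
  shows "cut_cost E c X = (\<Sum>e\<in>E. if card (e \<inter> X) = 1 then c e else 0)"
  unfolding cut_cost_def using assms by (simp add: sum.inter_filter)

lemma sum_cut_cost:
  assumes "finite E" and True: "finite I"
  shows "(\<Sum>i\<in>I. cut_cost E c (F i)) = (\<Sum>e\<in>E. c e * real (card {i\<in>I. card (e \<inter> F i) = 1}))"
proof -
  have "(\<Sum>i\<in>I. cut_cost E c (F i)) = (\<Sum>i\<in>I. \<Sum>e\<in>E. if card (e \<inter> F i) = 1 then c e else 0)"
    using assms by (simp add: cut_cost_as_sum)
  also have "\<dots> = (\<Sum>e\<in>E. \<Sum>i\<in>I. if card (e \<inter> F i) = 1 then c e else 0)"
    by (rule sum.swap)
  also have "\<dots> = (\<Sum>e\<in>E. c e * real (card {i\<in>I. card (e \<inter> F i) = 1}))"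
  proof (rule sum.cong[OF refl])
    fix e
    have "(\<Sum>i\<in>I. if card (e \<inter> F i) = 1 then c e else 0) = (\<Sum>i\<in>{i\<in>I. card (e \<inter> F i) = 1}. c e)"
      by (rule sum.inter_filter[OF True, symmetric])
    also have "\<dots> = c e * real (card {i\<in>I. card (e \<inter> F i) = 1})" by simp
    finally show "(\<Sum>i\<in>I. if card (e \<inter> F i) = 1 then c e else 0) = c e * real (card {i\<in>I. card (e \<inter> F i) = 1})" .
  qed
  finally show ?thesis .
qed

lemma graph_finE:
  assumes "graph V E" shows "finite E"
proof -
  have "E \<subseteq> Pow V" using assms unfolding graph_def by auto
  moreover have "finite V" using assms unfolding graph_def by auto
  ultimately show ?thesis using finite_subset by blast
qed

lemma cut_cost_nonneg:
  assumes "\<forall>e\<in>E. c e > 0"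
  shows "cut_cost E c X \<ge> 0"
  unfolding cut_cost_def using assms by (intro sum_nonneg) auto

lemma min_cut_le:
  assumes "graph V E" "is_cut V X"
  shows "min_cut_value V E c \<le> cut_cost E c X"
proof -
  have fin: "finite V" using assms unfolding graph_def by auto
  have "{cut_cost E c U |U. is_cut V U} = (cut_cost E c) ` {U. is_cut V U}" by auto
  moreover have "{U. is_cut V U} \<subseteq> Pow V" unfolding is_cut_def by auto
  ultimately have "finite {cut_cost E c U |U. is_cut V U}"
    using fin by (metis finite_Pow_iff finite_imageI finite_subset)
  then show ?thesis unfolding min_cut_value_def using assms(2) by (intro Min_le) auto
qed

lemma cut_cost_pos:
  assumes "connected_graph V E" "\<forall>e\<in>E. c e > 0" "is_cut V X"
  shows "cut_cost E c X > 0"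
proof -
  have G: "graph V E" using assms unfolding connected_graph_def by auto
  have finE: "finite E" using graph_finE[OF G] .
  obtain x where x: "x \<in> X" using assms(3) unfolding is_cut_def by auto
  obtain y where y: "y \<in> V" "y \<notin> X" using assms(3) unfolding is_cut_def by auto
  have xV: "x \<in> V" using x assms(3) unfolding is_cut_def by auto
  have path: "(x, y) \<in> (adj E)\<^sup>*" using assms(1) xV y unfolding connected_graph_def by auto
  have "\<And>z. (x, z) \<in> (adj E)\<^sup>* \<Longrightarrow> z \<notin> X \<Longrightarrow> \<exists>e\<in>E. card (e \<inter> X) = 1"
  proof -
    fix z assume "(x, z) \<in> (adj E)\<^sup>*" "z \<notin> X"
    then show "\<exists>e\<in>E. card (e \<inter> X) = 1"
    proof (induction rule: rtrancl_induct)
      case base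
      then show ?case using x by simp
    next
      case (step z' z)
      show ?case
      proof (cases "z' \<in> X")
        case True
        have "{z', z} \<in> E" using step(2) unfolding adj_def by auto
        moreover have "z' \<noteq> z" using True step(4) by auto
        ultimately show ?thesis using card_cross2[of z' z X] True step(4) by blast
      next
        case False
        then show ?thesis using step(3) by blast
      qed
    qed
  qed
  then obtain e where e: "e \<in> E" "card (e \<inter> X) = 1" using path y by blast
  have "0 < c e" using assms(2) e by auto
  also have "c e \<le> cut_cost E c X" unfolding cut_cost_def
    using e finE assms(2) by (intro member_le_sum) auto
  finally show ?thesis .
qed

theorem corollary2p4:
  fixes V :: "'a set" and E :: "'a set set" and c :: "'a set \<Rightarrow> real"
    and \<alpha> :: real and U :: "'a set"
  assumes "connected_graph V E"
    and "\<forall>e\<in>E. c e > 0"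
    and "\<alpha> \<ge> 1"
    and "approx_min_cut V E c \<alpha> U"
  shows "\<exists>T. T \<subseteq> V - U \<and> int (card T) \<le> \<lfloor>2 * \<alpha>\<rfloor> + 1 \<and>
             unique_min_terminal_cut V E c U T U"
proof -
  note conn = assms(1) and cpos = assms(2)
  have G: "graph V E" using conn unfolding connected_graph_def by auto
  have finV: "finite V" using G unfolding graph_def by auto
  have finE: "finite E" using graph_finE[OF G] .
  have cutU: "is_cut V U" and DA: "cut_cost E c U \<le> \<alpha> * min_cut_value V E c"
    using assms(4) unfolding approx_min_cut_def by auto
  define D where "D = cut_cost E c U"
  define lam where "lam = min_cut_value V E c"
  have lamle: "\<And>X. is_cut V X \<Longrightarrow> lam \<le> cut_cost E c X"
    unfolding lam_def using min_cut_le[OF G] by blast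
  have lampos: "lam > 0"
  proof -
    have fin: "finite {cut_cost E c U |U. is_cut V U}"
    proof -
      have "{cut_cost E c U |U. is_cut V U} = (cut_cost E c) ` {U. is_cut V U}" by auto
      moreover have "{U. is_cut V U} \<subseteq> Pow V" unfolding is_cut_def by auto
      ultimately show ?thesis using finV by (metis finite_Pow_iff finite_imageI finite_subset)
    qed
    have "lam \<in> {cut_cost E c U |U. is_cut V U}"
      unfolding lam_def min_cut_value_def using fin cutU by (intro Min_in) auto
    then obtain X where "is_cut V X" "lam = cut_cost E c X" by auto
    then show ?thesis using cut_cost_pos[OF conn cpos] by simp
  qed
  have DA': "D \<le> \<alpha> * lam" using DA unfolding D_def lam_def .
  have Dlam: "lam \<le> D" using lamle[OF cutU] unfolding D_def .
  define W where "W = V - U"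
  have UV: "U \<subseteq> V" "U \<noteq> {}" "W \<noteq> {}" using cutU unfolding is_cut_def W_def by auto
  define TT where "TT = {T. T \<subseteq> W \<and> unique_min_terminal_cut V E c U T U}"
  have "W \<in> TT"
  proof -
    have "terminal_cut V U W U" unfolding terminal_cut_def W_def using cutU UV by auto
    moreover have "\<forall>Y. terminal_cut V U W Y \<and> Y \<noteq> U \<longrightarrow> cut_cost E c U < cut_cost E c Y"
      unfolding terminal_cut_def W_def by auto
    ultimately show ?thesis unfolding TT_def unique_min_terminal_cut_def W_def using UV
      by (auto simp: W_def)
  qed
  then obtain T where T: "T \<in> TT" and Tmin: "\<And>T'. T' \<in> TT \<Longrightarrow> card T \<le> card T'"
    using ex_has_least_nat[of "\<lambda>T. T \<in> TT" W card] by blast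
  have good: "unique_min_terminal_cut V E c U T U" and TW: "T \<subseteq> W" using T unfolding TT_def by auto
  have finT: "finite T" using TW finV unfolding W_def using finite_subset by blast
  have Tne: "T \<noteq> {}" using good unfolding unique_min_terminal_cut_def by auto
  have strict: "\<And>Y. terminal_cut V U T Y \<Longrightarrow> Y \<noteq> U \<Longrightarrow> D < cut_cost E c Y"
    using good unfolding unique_min_terminal_cut_def D_def by auto
  obtain t0 where t0: "t0 \<in> T" using Tne by auto
  have t0V: "t0 \<in> V" "t0 \<notin> U" using t0 TW unfolding W_def by auto
  define S where "S = T - {t0}"
  have finS: "finite S" using finT unfolding S_def by auto
  define n where "n = card S"
  have cT0: "card T > 0" using finT t0 card_gt_0_iff by blast
  have cardT: "card T = n + 1" unfolding n_def S_def using finT t0 cT0 by simp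
  have wit: "\<forall>t\<in>S. \<exists>Y. terminal_cut V U (T - {t}) Y \<and> Y \<noteq> U \<and> cut_cost E c Y \<le> D"
  proof
    fix t assume tS: "t \<in> S"
    then have tT: "t \<in> T" "t \<noteq> t0" unfolding S_def by auto
    have "card (T - {t}) < card T" using finT tT(1) by (rule card_Diff1_less)
    then have "T - {t} \<notin> TT" using Tmin by force
    then have ng: "\<not> unique_min_terminal_cut V E c U (T - {t}) U" using TW unfolding TT_def by auto
    have ne: "T - {t} \<noteq> {}" using t0 tT by auto
    have tc: "terminal_cut V U (T - {t}) U" using cutU TW UV unfolding terminal_cut_def W_def by auto
    have "U \<inter> (T - {t}) = {}" "T - {t} \<subseteq> V" using TW unfolding W_def by auto
    then have "\<not> (\<forall>Y. terminal_cut V U (T - {t}) Y \<and> Y \<noteq> U \<longrightarrow> cut_cost E c U < cut_cost E c Y)"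
      using ng ne tc UV unfolding unique_min_terminal_cut_def by auto
    then show "\<exists>Y. terminal_cut V U (T - {t}) Y \<and> Y \<noteq> U \<and> cut_cost E c Y \<le> D"
      unfolding D_def by (auto simp: not_less)
  qed
  then obtain Y where Y: "\<And>t. t \<in> S \<Longrightarrow> terminal_cut V U (T - {t}) (Y t) \<and> Y t \<noteq> U \<and> cut_cost E c (Y t) \<le> D"
    by metis
  have UY: "\<And>t. t \<in> S \<Longrightarrow> U \<subseteq> Y t" and YV: "\<And>t. t \<in> S \<Longrightarrow> Y t \<subseteq> V"
    using Y unfolding terminal_cut_def is_cut_def by auto
  have Yav: "\<And>t s. t \<in> S \<Longrightarrow> s \<in> T \<Longrightarrow> s \<noteq> t \<Longrightarrow> s \<notin> Y t"
    using Y unfolding terminal_cut_def by blast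
  have tY: "\<And>t. t \<in> S \<Longrightarrow> t \<in> Y t"
  proof (rule ccontr)
    fix t assume tS: "t \<in> S" and nt: "t \<notin> Y t"
    have "terminal_cut V U T (Y t)" using Y[OF tS] nt unfolding terminal_cut_def by auto
    then have "D < cut_cost E c (Y t)" using strict Y[OF tS] by blast
    then show False using Y[OF tS] by simp
  qed
  define m where "m v = card {s\<in>S. v \<in> Y s}" for v
  have mt: "\<And>t. t \<in> S \<Longrightarrow> m t = 1"
  proof -
    fix t assume tS: "t \<in> S"
    have "{s\<in>S. t \<in> Y s} = {t}" using tS tY Yav unfolding S_def by auto
    then show "m t = 1" unfolding m_def by simp
  qed
  have m0: "m t0 = 0"
  proof -
    have "{s\<in>S. t0 \<in> Y s} = {}" using Yav t0 unfolding S_def by auto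
    then show ?thesis unfolding m_def by (metis card.empty)
  qed
  have mU: "\<And>u. u \<in> U \<Longrightarrow> m u = n"
  proof -
    fix u assume "u \<in> U"
    then have "{s\<in>S. u \<in> Y s} = S" using UY by auto
    then show "m u = n" unfolding m_def n_def by simp
  qed
  have mV: "\<And>v. m v > 0 \<Longrightarrow> v \<in> V"
  proof -
    fix v assume "m v > 0"
    then have "{s\<in>S. v \<in> Y s} \<noteq> {}" unfolding m_def by (metis card.empty less_irrefl)
    then show "v \<in> V" using YV by auto
  qed
  define L where "L j = {v. j \<le> m v}" for j
  define P where "P t = {v. v \<in> Y t \<and> m v = 1}" for t
  have Lge: "\<And>j. j \<in> {3..n} \<Longrightarrow> D \<le> cut_cost E c (L j)"
  proof -
    fix j assume j: "j \<in> {3..n}"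
    have UL: "U \<subseteq> L j" using mU j unfolding L_def by auto
    have LV: "L j \<subseteq> V" using mV j unfolding L_def by fastforce
    have t0L: "t0 \<notin> L j" using m0 j unfolding L_def by auto
    have LT: "L j \<subseteq> V - T"
    proof
      fix v assume v: "v \<in> L j"
      have "v \<notin> T"
      proof
        assume "v \<in> T"
        then have "v = t0 \<or> v \<in> S" unfolding S_def by auto
        then have "m v \<le> 1" using m0 mt by auto
        then show False using v j unfolding L_def by auto
      qed
      then show "v \<in> V - T" using v LV by auto
    qed
    have "terminal_cut V U T (L j)"
      unfolding terminal_cut_def is_cut_def using UL LV t0L t0V UV LT by auto
    then show "D \<le> cut_cost E c (L j)" using strict unfolding D_def
      by (cases "L j = U") (auto intro: less_imp_le)
  qed
  have Pge: "\<And>t. t \<in> S \<Longrightarrow> lam \<le> cut_cost E c (P t)"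
  proof -
    fix t assume tS: "t \<in> S"
    have "t \<in> P t" using tS tY mt unfolding P_def by auto
    moreover have "P t \<subseteq> V" using YV tS unfolding P_def by auto
    moreover have "t0 \<notin> P t" using m0 unfolding P_def by auto
    ultimately have "is_cut V (P t)" unfolding is_cut_def using t0V by auto
    then show "lam \<le> cut_cost E c (P t)" by (rule lamle)
  qed
  have key: "(\<Sum>j\<in>{3..n}. cut_cost E c (L j)) + (\<Sum>t\<in>S. cut_cost E c (P t))
      \<le> (\<Sum>t\<in>S. cut_cost E c (Y t))"
  proof -
    have "(\<Sum>j\<in>{3..n}. cut_cost E c (L j)) + (\<Sum>t\<in>S. cut_cost E c (P t))
       = (\<Sum>e\<in>E. c e * real (card {j\<in>{3..n}. card (e \<inter> L j) = 1})
                 + c e * real (card {t\<in>S. card (e \<inter> P t) = 1}))"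
      by (simp add: sum_cut_cost[OF finE] finS sum.distrib)
    also have "\<dots> \<le> (\<Sum>e\<in>E. c e * real (card {t\<in>S. card (e \<inter> Y t) = 1}))"
    proof (rule sum_mono)
      fix e assume eE: "e \<in> E"
      obtain x y where exy: "e = {x, y}" "x \<noteq> y"
        using G eE unfolding graph_def by (metis card_2_iff)
      define a where "a = {s\<in>S. x \<in> Y s}"
      define b where "b = {s\<in>S. y \<in> Y s}"
      have ma: "m x = card a" "m y = card b" unfolding m_def a_def b_def by auto
      have e1: "{t\<in>S. card (e \<inter> Y t) = 1} = {t\<in>S. (t\<in>a) \<noteq> (t\<in>b)}"
        unfolding a_def b_def exy using card_cross2[OF exy(2)] by auto
      have e2: "{j\<in>{3..n}. card (e \<inter> L j) = 1} = {j\<in>{3..card S}. (j \<le> card a) \<noteq> (j \<le> card b)}"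
        unfolding exy n_def using card_cross2[OF exy(2)] ma by (auto simp: L_def)
      have e3: "{t\<in>S. card (e \<inter> P t) = 1} = {t\<in>S. (t\<in>a \<and> card a = 1) \<noteq> (t\<in>b \<and> card b = 1)}"
        unfolding exy using card_cross2[OF exy(2)] ma by (auto simp: P_def a_def b_def)
      have ineq: "card {j\<in>{3..n}. card (e \<inter> L j) = 1} + card {t\<in>S. card (e \<inter> P t) = 1}
          \<le> card {t\<in>S. card (e \<inter> Y t) = 1}"
        unfolding e1 e2 e3 by (rule edge_count[OF finS]) (auto simp: a_def b_def)
      have ce: "c e \<ge> 0" using cpos eE by auto
      have "c e * real (card {j\<in>{3..n}. card (e \<inter> L j) = 1}) + c e * real (card {t\<in>S. card (e \<inter> P t) = 1})
          = c e * real (card {j\<in>{3..n}. card (e \<inter> L j) = 1} + card {t\<in>S. card (e \<inter> P t) = 1})"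
        by (simp add: distrib_left)
      also have "\<dots> \<le> c e * real (card {t\<in>S. card (e \<inter> Y t) = 1})"
        using ineq ce by (intro mult_left_mono) auto
      finally show "c e * real (card {j\<in>{3..n}. card (e \<inter> L j) = 1}) + c e * real (card {t\<in>S. card (e \<inter> P t) = 1})
          \<le> c e * real (card {t\<in>S. card (e \<inter> Y t) = 1})" .
    qed
    also have "\<dots> = (\<Sum>t\<in>S. cut_cost E c (Y t))"
      by (simp add: sum_cut_cost[OF finE finS])
    finally show ?thesis .
  qed
  have s1: "real (card {3..n}) * D \<le> (\<Sum>j\<in>{3..n}. cut_cost E c (L j))"
    by (rule sum_bounded_below) (rule Lge)
  have s2: "real n * lam \<le> (\<Sum>t\<in>S. cut_cost E c (P t))"
    unfolding n_def by (rule sum_bounded_below) (rule Pge)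
  have s3: "(\<Sum>t\<in>S. cut_cost E c (Y t)) \<le> real n * D"
    unfolding n_def by (rule sum_bounded_above) (use Y in auto)
  have c3: "real (card {3..n}) \<ge> real n - 2" by simp
  have D0: "D \<ge> 0" using Dlam lampos by simp
  have "(real n - 2) * D \<le> real (card {3..n}) * D" using c3 D0 by (intro mult_right_mono) auto
  then have "real n * lam \<le> 2 * D" using s1 s2 s3 key by (simp add: algebra_simps)
  also have "\<dots> \<le> 2 * (\<alpha> * lam)" using DA' by simp
  finally have "real n \<le> 2 * \<alpha>" using lampos by (simp add: mult.assoc)
  then have "int n \<le> \<lfloor>2 * \<alpha>\<rfloor>" by (simp add: le_floor_iff)
  then have "int (card T) \<le> \<lfloor>2 * \<alpha>\<rfloor> + 1" using cardT by simp
  then show ?thesis using TW good unfolding W_def by blast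
qed

end
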